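(* Let $\bar z$ be a feasible point of the MPCC $$\min f(z)\ \text{ s.t. }\ g(z)\le 0,\ h(z)=0,\ 0\le G(z)\perp H(z)\ge 0,$$ where $f:\mathbb{R}^n\to\mathbb{R}$, $g:\mathbb{R}^n\to\mathbb{R}^{n_g}$, $h:\mathbb{R}^n\to\mathbb{R}^{n_h}$, $G,H:\mathbb{R}^n\to\mathbb{R}^m$ are differentiable. If $\bar z$ is piecewise M-stationary, then $\bar z$ is B-stationary.
   Context: The complementarity constraint $0\le G(z)\perp H(z)\ge 0$ means $G(z)\ge0$, $H(z)\ge 0$, $G_i(z)H_i(z)=0$ for all $i$. At a feasible $\bar z$ define $\alpha(\bar z)=\{i: G_i(\bar z)=0<H_i(\bar z)\}$, $\gamma(\bar z)=\{i: G_i(\bar z)>0=H_i(\bar z)\}$, $\beta(\bar z)=\{i: G_i(\bar z)=0=H_i(\bar z)\}$. Let $\mathcal T(\bar z)$ be the (Bouligand) tangent cone of the MPCC feasible set at $\bar z$. $\bar z$ is B-stationary if $\nabla f(\bar z)^Td\ge 0$ for all $d\in\mathcal T(\bar z)$. Piecewise M-stationarity: let $\mathcal P(\beta(\bar z))$ be the set of all pairs $(\beta_1,\beta_2)$ with $\beta_1\cup\beta_2=\beta(\bar z)$, $\beta_1\cap\beta_2=\emptyset$. $\bar z$ is piecewise M-stationary if for every $(\beta_1,\beta_2)\in\mathcal P(\beta(\bar z))$ there exist multipliers $\bar\lambda=(\bar\lambda^g,\bar\lambda^h,\bar\lambda^G,\bar\lambda^H)$ (possibly depending on the partition) with $$0=\nabla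 f(\bar z)+\sum_{i=1}^{n_g}\bar\lambda^g_i\nabla g_i(\bar z)+\sum_{i=1}^{n_h}\bar\lambda^h_i\nabla h_i(\bar z)-\sum_{i\in\alpha(\bar z)\cup\beta(\bar z)}\bar\lambda^G_i\nabla G_i(\bar z)-\sum_{i\in\gamma(\bar z)\cup\beta(\bar z)}\bar\lambda^H_i\nabla H_i(\bar z),$$ $\bar\lambda^g_i\ge0$ and $\bar\lambda^g_ig_i(\bar z)=0$ for all $i$; $\bar\lambda^H_i\ge 0$ for $i\in\beta_1$; $\bar\lambda^G_i\ge0$ for $i\in\beta_2$; and for every $i\in\beta(\bar z)$ either $\bar\lambda^G_i,\bar\lambda^H_i\ge 0$ or $\bar\lambda^G_i\bar\lambda^H_i=0$. *)

theory Defs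
  imports "HOL-Analysis.Analysis"
begin

text \<open>Gradient of a (differentiable) real-valued function on a Euclidean space:
  the vector representing the Frechet derivative, so that
  grad f z \<bullet> d = frechet_derivative f (at z) d.\<close>
definition grad :: "('a::euclidean_space \<Rightarrow> real) \<Rightarrow> 'a \<Rightarrow> 'a" where
  "grad f z = (\<Sum>b\<in>Basis. frechet_derivative f (at z) b *\<^sub>R b)"

definition mpcc_feasible ::
  "(nat \<Rightarrow> 'a \<Rightarrow> real) \<Rightarrow> (nat \<Rightarrow> 'a \<Rightarrow> real) \<Rightarrow> (nat \<Rightarrow> 'a \<Rightarrow> real) \<Rightarrow> (nat \<Rightarrow> 'a \<Rightarrow> real)
   \<Rightarrow> nat \<Rightarrow> nat \<Rightarrow> nat \<Rightarrow> 'a set" where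
  "mpcc_feasible g h G H ng nh m =
     {z. (\<forall>i<ng. g i z \<le> 0) \<and> (\<forall>i<nh. h i z = 0) \<and>
         (\<forall>i<m. G i z \<ge> 0 \<and> H i z \<ge> 0 \<and> G i z * H i z = 0)}"

definition tangent_cone :: "'a::real_normed_vector set \<Rightarrow> 'a \<Rightarrow> 'a set" where
  "tangent_cone S z = {d. \<exists>zk t. (\<forall>k. zk k \<in> S) \<and> zk \<longlonglongrightarrow> z \<and>
       (\<forall>k. t k > 0) \<and> t \<longlonglongrightarrow> 0 \<and> (\<lambda>k. (1 / t k) *\<^sub>R (zk k - z)) \<longlonglongrightarrow> d}"

definition idx_alpha :: "(nat \<Rightarrow> 'a \<Rightarrow> real) \<Rightarrow> (nat \<Rightarrow> 'a \<Rightarrow> real) \<Rightarrow> nat \<Rightarrow> 'a \<Rightarrow> nat set" where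
  "idx_alpha G H m z = {i. i < m \<and> G i z = 0 \<and> 0 < H i z}"

definition idx_gamma :: "(nat \<Rightarrow> 'a \<Rightarrow> real) \<Rightarrow> (nat \<Rightarrow> 'a \<Rightarrow> real) \<Rightarrow> nat \<Rightarrow> 'a \<Rightarrow> nat set" where
  "idx_gamma G H m z = {i. i < m \<and> G i z > 0 \<and> H i z = 0}"

definition idx_beta :: "(nat \<Rightarrow> 'a \<Rightarrow> real) \<Rightarrow> (nat \<Rightarrow> 'a \<Rightarrow> real) \<Rightarrow> nat \<Rightarrow> 'a \<Rightarrow> nat set" where
  "idx_beta G H m z = {i. i < m \<and> G i z = 0 \<and> H i z = 0}"

definition B_stationary ::
  "('a::euclidean_space \<Rightarrow> real) \<Rightarrow> (nat \<Rightarrow> 'a \<Rightarrow> real) \<Rightarrow> (nat \<Rightarrow> 'a \<Rightarrow> real) \<Rightarrow> (nat \<Rightarrow> 'a \<Rightarrow> real)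
   \<Rightarrow> (nat \<Rightarrow> 'a \<Rightarrow> real) \<Rightarrow> nat \<Rightarrow> nat \<Rightarrow> nat \<Rightarrow> 'a \<Rightarrow> bool" where
  "B_stationary f g h G H ng nh m z \<longleftrightarrow>
     (\<forall>d\<in>tangent_cone (mpcc_feasible g h G H ng nh m) z. grad f z \<bullet> d \<ge> 0)"

definition piecewise_M_stationary ::
  "('a::euclidean_space \<Rightarrow> real) \<Rightarrow> (nat \<Rightarrow> 'a \<Rightarrow> real) \<Rightarrow> (nat \<Rightarrow> 'a \<Rightarrow> real) \<Rightarrow> (nat \<Rightarrow> 'a \<Rightarrow> real)
   \<Rightarrow> (nat \<Rightarrow> 'a \<Rightarrow> real) \<Rightarrow> nat \<Rightarrow> nat \<Rightarrow> nat \<Rightarrow> 'a \<Rightarrow> bool" where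
  "piecewise_M_stationary f g h G H ng nh m z \<longleftrightarrow>
     (\<forall>\<beta>1 \<beta>2. \<beta>1 \<union> \<beta>2 = idx_beta G H m z \<and> \<beta>1 \<inter> \<beta>2 = {} \<longrightarrow>
       (\<exists>lg lh lG lH :: nat \<Rightarrow> real.
          grad f z + (\<Sum>i<ng. lg i *\<^sub>R grad (g i) z) + (\<Sum>i<nh. lh i *\<^sub>R grad (h i) z)
            - (\<Sum>i\<in>idx_alpha G H m z \<union> idx_beta G H m z. lG i *\<^sub>R grad (G i) z)
            - (\<Sum>i\<in>idx_gamma G H m z \<union> idx_beta G H m z. lH i *\<^sub>R grad (H i) z) = 0 \<and>
          (\<forall>i<ng. lg i \<ge> 0 \<and> lg i * g i z = 0) \<and>
          (\<forall>i\<in>\<beta>1. lH i \<ge> 0) \<and>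
          (\<forall>i\<in>\<beta>2. lG i \<ge> 0) \<and>
          (\<forall>i\<in>idx_beta G H m z. (lG i \<ge> 0 \<and> lH i \<ge> 0) \<or> lG i * lH i = 0)))"

end

theory Submission
  imports Defs
begin

lemma grad_inner:
  assumes "\<phi> differentiable (at z)"
  shows "grad \<phi> z \<bullet> d = frechet_derivative \<phi> (at z) d"
proof -
  let ?F = "frechet_derivative \<phi> (at z)"
  have lin: "linear ?F"
    using assms frechet_derivative_works has_derivative_linear by blast
  have "?F d = ?F (\<Sum>b\<in>Basis. (d \<bullet> b) *\<^sub>R b)" by (simp add: euclidean_representation)
  also have "\<dots> = (\<Sum>b\<in>Basis. (d \<bullet> b) * ?F b)"
    using lin by (simp add: linear_sum linear_scale)
  finally show ?thesis
    unfolding grad_def by (simp add: inner_sum_left inner_sum_right mult.commute inner_commute)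
qed

lemma deriv_seq:
  fixes \<phi> :: "'a::real_normed_vector \<Rightarrow> real"
  assumes der: "(\<phi> has_derivative F) (at z)" and zk: "zk \<longlonglongrightarrow> z" and tpos: "\<forall>k. t k > 0"
    and v: "(\<lambda>k. (1 / t k) *\<^sub>R (zk k - z)) \<longlonglongrightarrow> d"
  shows "(\<lambda>k. (\<phi> (zk k) - \<phi> z) / t k) \<longlonglongrightarrow> F d"
proof -
  define vk where "vk = (\<lambda>k. (1 / t k) *\<^sub>R (zk k - z))"
  have bl: "bounded_linear F" using der has_derivative_bounded_linear by blast
  have "Bseq vk" using v unfolding vk_def using convergent_imp_Bseq convergentI by blast
  then obtain B where B: "B > 0" "\<And>k. norm (vk k) \<le> B" by (meson BseqE)
  have Fv: "(\<lambda>k. F (vk k)) \<longlonglongrightarrow> F d"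
    using bounded_linear.tendsto[OF bl] v unfolding vk_def by blast
  have q: "(\<lambda>k. (\<phi> (zk k) - \<phi> z) / t k - F (vk k)) \<longlonglongrightarrow> 0"
  proof (rule LIMSEQ_I)
    fix r :: real assume r: "0 < r"
    define e where "e = r / (2 * B)"
    have e: "e > 0" using r B by (simp add: e_def)
    obtain \<delta> where \<delta>: "\<delta> > 0" "\<And>y. norm (y - z) < \<delta> \<Longrightarrow> norm (\<phi> y - \<phi> z - F (y - z)) \<le> e * norm (y - z)"
      using der e unfolding has_derivative_at_alt by blast
    obtain no where no: "\<And>n. n \<ge> no \<Longrightarrow> norm (zk n - z) < \<delta>"
      using zk \<delta>(1) LIMSEQ_D by blast
    show "\<exists>no. \<forall>n\<ge>no. norm ((\<phi> (zk n) - \<phi> z) / t n - F (vk n) - 0) < r"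
    proof (intro exI allI impI)
      fix n assume "n \<ge> no"
      hence h: "norm (\<phi> (zk n) - \<phi> z - F (zk n - z)) \<le> e * norm (zk n - z)" using no \<delta> by blast
      have tn: "t n > 0" using tpos by blast
      have "F (vk n) = F (zk n - z) / t n"
        unfolding vk_def using linear_cmul[OF bounded_linear.linear[OF bl]] by simp
      hence "(\<phi> (zk n) - \<phi> z) / t n - F (vk n) = (\<phi> (zk n) - \<phi> z - F (zk n - z)) / t n"
        by (simp add: diff_divide_distrib)
      hence "norm ((\<phi> (zk n) - \<phi> z) / t n - F (vk n) - 0) = norm (\<phi> (zk n) - \<phi> z - F (zk n - z)) / t n"
        using tn by simp
      also have "\<dots> \<le> e * norm (zk n - z) / t n"
        using h tn by (simp add: divide_right_mono)
      also have "\<dots> = e * norm (vk n)"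
        unfolding vk_def using tn by simp
      also have "\<dots> \<le> e * B" using B e by (simp add: mult_left_mono)
      also have "\<dots> < r" using r B by (simp add: e_def)
      finally show "norm ((\<phi> (zk n) - \<phi> z) / t n - F (vk n) - 0) < r" .
    qed
  qed
  have "(\<lambda>k. ((\<phi> (zk k) - \<phi> z) / t k - F (vk k)) + F (vk k)) \<longlonglongrightarrow> 0 + F d"
    using tendsto_add[OF q Fv] .
  thus ?thesis by simp
qed

lemma deriv_seq_grad:
  assumes "\<phi> differentiable (at z)" "zk \<longlonglongrightarrow> z" "\<forall>k. t k > 0"
    "(\<lambda>k. (1 / t k) *\<^sub>R (zk k - z)) \<longlonglongrightarrow> d"
  shows "(\<lambda>k. (\<phi> (zk k) - \<phi> z) / t k) \<longlonglongrightarrow> grad \<phi> z \<bullet> d"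
  using deriv_seq[OF frechet_derivative_works[THEN iffD1, OF assms(1)] assms(2-4)]
    grad_inner[OF assms(1)] by simp

theorem theorem2p3:
  fixes f :: "'a::euclidean_space \<Rightarrow> real"
    and g h G H :: "nat \<Rightarrow> 'a \<Rightarrow> real"
    and ng nh m :: nat
    and z :: 'a
  assumes "\<And>x. f differentiable (at x)"
    and "\<And>i x. i < ng \<Longrightarrow> g i differentiable (at x)"
    and "\<And>i x. i < nh \<Longrightarrow> h i differentiable (at x)"
    and "\<And>i x. i < m \<Longrightarrow> G i differentiable (at x)"
    and "\<And>i x. i < m \<Longrightarrow> H i differentiable (at x)"
    and "z \<in> mpcc_feasible g h G H ng nh m"
    and "piecewise_M_stationary f g h G H ng nh m z"
  shows "B_stationary f g h G H ng nh m z"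
  unfolding B_stationary_def
proof
  fix d assume "d \<in> tangent_cone (mpcc_feasible g h G H ng nh m) z"
  then obtain zk t where zkF: "\<forall>k. zk k \<in> mpcc_feasible g h G H ng nh m" and zk: "zk \<longlonglongrightarrow> z"
    and tpos: "\<forall>k. t k > 0" and "t \<longlonglongrightarrow> 0" and v: "(\<lambda>k. (1 / t k) *\<^sub>R (zk k - z)) \<longlonglongrightarrow> d"
    unfolding tangent_cone_def by blast
  define D where "D = (\<lambda>\<phi>. grad \<phi> z \<bullet> d)"
  have lim: "\<And>\<phi>. \<phi> differentiable (at z) \<Longrightarrow> (\<lambda>k. (\<phi> (zk k) - \<phi> z) / t k) \<longlonglongrightarrow> D \<phi>"
    unfolding D_def using deriv_seq_grad zk tpos v by blast
  have zF: "\<forall>i<ng. g i z \<le> 0" "\<forall>i<nh. h i z = 0" "\<forall>i<m. G i z \<ge> 0 \<and> H i z \<ge> 0 \<and> G i z * H i z = 0"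
    using assms(6) unfolding mpcc_feasible_def by auto
  have kF: "\<And>k. (\<forall>i<ng. g i (zk k) \<le> 0) \<and> (\<forall>i<nh. h i (zk k) = 0) \<and>
         (\<forall>i<m. G i (zk k) \<ge> 0 \<and> H i (zk k) \<ge> 0 \<and> G i (zk k) * H i (zk k) = 0)"
    using zkF unfolding mpcc_feasible_def by auto
  have Dg: "D (g i) \<le> 0" if "i < ng" "g i z = 0" for i
  proof (rule LIMSEQ_le_const2[OF lim[OF assms(2)[OF that(1)]]])
    show "\<exists>N. \<forall>n\<ge>N. (g i (zk n) - g i z) / t n \<le> 0"
    proof (intro exI allI impI)
      fix n show "(g i (zk n) - g i z) / t n \<le> 0"
        using kF[of n] that tpos by (simp add: divide_nonpos_pos)
    qed
  qed
  have Dh: "D (h i) = 0" if "i < nh" for i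
  proof -
    have "(\<lambda>k. (h i (zk k) - h i z) / t k) = (\<lambda>k. 0)" using kF zF that by auto
    thus ?thesis using lim[OF assms(3)[OF that]] by (simp add: LIMSEQ_const_iff)
  qed
  have DGnn: "D (G i) \<ge> 0" if "i \<in> idx_beta G H m z" for i
  proof (rule LIMSEQ_le_const[OF lim[OF assms(4)]])
    show "i < m" using that unfolding idx_beta_def by auto
    show "\<exists>N. \<forall>n\<ge>N. 0 \<le> (G i (zk n) - G i z) / t n"
    proof (intro exI allI impI)
      fix n show "0 \<le> (G i (zk n) - G i z) / t n"
        using kF[of n] that tpos[rule_format, of n] unfolding idx_beta_def by simp
    qed
  qed
  have DHnn: "D (H i) \<ge> 0" if "i \<in> idx_beta G H m z" for i
  proof (rule LIMSEQ_le_const[OF lim[OF assms(5)]])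
    show "i < m" using that unfolding idx_beta_def by auto
    show "\<exists>N. \<forall>n\<ge>N. 0 \<le> (H i (zk n) - H i z) / t n"
    proof (intro exI allI impI)
      fix n show "0 \<le> (H i (zk n) - H i z) / t n"
        using kF[of n] that tpos[rule_format, of n] unfolding idx_beta_def by simp
    qed
  qed
  have DGH: "D (G i) * D (H i) = 0" if "i \<in> idx_beta G H m z" for i
  proof -
    have im: "i < m" "G i z = 0" "H i z = 0" using that unfolding idx_beta_def by auto
    have "(\<lambda>k. ((G i (zk k) - G i z) / t k) * ((H i (zk k) - H i z) / t k)) \<longlonglongrightarrow> D (G i) * D (H i)"
      using tendsto_mult[OF lim[OF assms(4)[OF im(1)]] lim[OF assms(5)[OF im(1)]]] .
    moreover have "(\<lambda>k. ((G i (zk k) - G i z) / t k) * ((H i (zk k) - H i z) / t k)) = (\<lambda>k. 0)"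
      using kF im by auto
    ultimately show ?thesis by (simp add: LIMSEQ_const_iff)
  qed
  have DGa: "D (G i) = 0" if "i \<in> idx_alpha G H m z" for i
  proof -
    have im: "i < m" "G i z = 0" "H i z > 0" using that unfolding idx_alpha_def by auto
    have cH: "(\<lambda>k. H i (zk k)) \<longlonglongrightarrow> H i z"
      using isCont_tendsto_compose[OF differentiable_imp_continuous_within[OF assms(5)[OF im(1)]] zk] .
    have "(\<lambda>k. ((G i (zk k) - G i z) / t k) * H i (zk k)) \<longlonglongrightarrow> D (G i) * H i z"
      using tendsto_mult[OF lim[OF assms(4)[OF im(1)]] cH] .
    moreover have "(\<lambda>k. ((G i (zk k) - G i z) / t k) * H i (zk k)) = (\<lambda>k. 0)"
      using kF im by auto
    ultimately have "D (G i) * H i z = 0" by (simp add: LIMSEQ_const_iff)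
    thus ?thesis using im by simp
  qed
  have DHg: "D (H i) = 0" if "i \<in> idx_gamma G H m z" for i
  proof -
    have im: "i < m" "H i z = 0" "G i z > 0" using that unfolding idx_gamma_def by auto
    have cG: "(\<lambda>k. G i (zk k)) \<longlonglongrightarrow> G i z"
      using isCont_tendsto_compose[OF differentiable_imp_continuous_within[OF assms(4)[OF im(1)]] zk] .
    have "(\<lambda>k. ((H i (zk k) - H i z) / t k) * G i (zk k)) \<longlonglongrightarrow> D (H i) * G i z"
      using tendsto_mult[OF lim[OF assms(5)[OF im(1)]] cG] .
    moreover have "(\<lambda>k. ((H i (zk k) - H i z) / t k) * G i (zk k)) = (\<lambda>k. 0)"
      using kF im by (auto simp: mult.commute)
    ultimately have "D (H i) * G i z = 0" by (simp add: LIMSEQ_const_iff)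
    thus ?thesis using im by simp
  qed
  let ?A = "idx_alpha G H m z" and ?B = "idx_beta G H m z" and ?C = "idx_gamma G H m z"
  define \<beta>1 where "\<beta>1 = {i\<in>?B. D (G i) = 0}"
  define \<beta>2 where "\<beta>2 = {i\<in>?B. D (G i) \<noteq> 0}"
  have "\<beta>1 \<union> \<beta>2 = ?B \<and> \<beta>1 \<inter> \<beta>2 = {}" unfolding \<beta>1_def \<beta>2_def by auto
  note ex = assms(7)[unfolded piecewise_M_stationary_def, rule_format, OF this]
  obtain lg lh lG lH :: "nat \<Rightarrow> real" where
    eq: "grad f z + (\<Sum>i<ng. lg i *\<^sub>R grad (g i) z) + (\<Sum>i<nh. lh i *\<^sub>R grad (h i) z)
            - (\<Sum>i\<in>?A \<union> ?B. lG i *\<^sub>R grad (G i) z)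
            - (\<Sum>i\<in>?C \<union> ?B. lH i *\<^sub>R grad (H i) z) = 0"
    and lg: "\<forall>i<ng. lg i \<ge> 0 \<and> lg i * g i z = 0"
    and l1: "\<forall>i\<in>\<beta>1. lH i \<ge> 0" and l2: "\<forall>i\<in>\<beta>2. lG i \<ge> 0"
    using ex by (elim exE conjE) (rule that)
  have "D f + (\<Sum>i<ng. lg i * D (g i)) + (\<Sum>i<nh. lh i * D (h i))
            - (\<Sum>i\<in>?A \<union> ?B. lG i * D (G i))
            - (\<Sum>i\<in>?C \<union> ?B. lH i * D (H i)) = 0"
    using arg_cong[OF eq, of "\<lambda>x. x \<bullet> d"] unfolding D_def
    by (simp add: inner_diff_left inner_add_left inner_sum_left)
  moreover have "(\<Sum>i<ng. lg i * D (g i)) \<le> 0"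
  proof (rule sum_nonpos)
    fix i assume "i \<in> {..<ng}"
    hence i: "i < ng" by simp
    show "lg i * D (g i) \<le> 0"
    proof (cases "g i z = 0")
      case True thus ?thesis using Dg[OF i True] lg i by (simp add: mult_nonneg_nonpos)
    next
      case False
      hence "lg i = 0" using lg i by auto
      thus ?thesis by simp
    qed
  qed
  moreover have "(\<Sum>i<nh. lh i * D (h i)) = 0" using Dh by simp
  moreover have "(\<Sum>i\<in>?A \<union> ?B. lG i * D (G i)) \<ge> 0"
  proof (rule sum_nonneg)
    fix i assume "i \<in> ?A \<union> ?B"
    thus "0 \<le> lG i * D (G i)"
    proof
      assume "i \<in> ?A" thus ?thesis using DGa by simp
    next
      assume iB: "i \<in> ?B"
      show ?thesis
      proof (cases "D (G i) = 0")
        case True thus ?thesis by simp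
      next
        case False
        hence "i \<in> \<beta>2" using iB unfolding \<beta>2_def by simp
        thus ?thesis using l2 DGnn[OF iB] by simp
      qed
    qed
  qed
  moreover have "(\<Sum>i\<in>?C \<union> ?B. lH i * D (H i)) \<ge> 0"
  proof (rule sum_nonneg)
    fix i assume "i \<in> ?C \<union> ?B"
    thus "0 \<le> lH i * D (H i)"
    proof
      assume "i \<in> ?C" thus ?thesis using DHg by simp
    next
      assume iB: "i \<in> ?B"
      show ?thesis
      proof (cases "D (G i) = 0")
        case True
        hence "i \<in> \<beta>1" using iB unfolding \<beta>1_def by simp
        thus ?thesis using l1 DHnn[OF iB] by simp
      next
        case False
        hence "D (H i) = 0" using DGH[OF iB] by simp
        thus ?thesis by simp
      qed
    qed
  qed
  ultimately have "D f \<ge> 0" by linarith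
  thus "grad f z \<bullet> d \<ge> 0" unfolding D_def .
qed

end
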